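(* The vector $\mathbf{w}:=\mathbf{M}(\mathbf{t}-\mathbf{t}_{\uparrow})/\|\mathbf{M}(\mathbf{t}-\mathbf{t}_{\uparrow})\|_1$ computed in Algorithm 1 is a weight vector, i.e., $\mathbf{w}\geq 0$ and $\|\mathbf{w}\|_1=1$.
   Context: $\mathbf{M}$ is a symmetric positive-definite matrix defining the norm $\|\mathbf{v}\|^2=\mathbf{v}^T\mathbf{M}\mathbf{v}$; $\|\cdot\|_1$ is the 1-norm. In Algorithm 1 (point-oriented Pareto computation), $\mathbf{t}\in\mathbb{R}^{m}$ is the given threshold vector, $\Phi$ is a nonempty finite set of points, $\mathrm{down}(\Phi)$ is the downward closure of the convex hull of $\Phi$, and $\mathbf{t}_{\uparrow}$ is the point $\mathbf{x}\in\mathrm{down}(\Phi)$ minimising $\|\mathbf{t}-\mathbf{x}\|$; $\mathbf{w}$ is computed in an iteration of the while loop (which runs only while $\|\mathbf{t}_{\downarrow}-\mathbf{t}_{\uparrow}\|>\varepsilon$), so that $\mathbf{t}\neq\mathbf{t}_{\uparrow}$, i.e. $\mathbf{t}\notin\mathrm{down}(\Phi)$. *)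

theory Defs
  imports "HOL-Analysis.Analysis"
begin

definition sym_pos_def_mat :: "real^'m^'m \<Rightarrow> bool" where
  "sym_pos_def_mat M \<longleftrightarrow> transpose M = M \<and> (\<forall>v. v \<noteq> 0 \<longrightarrow> v \<bullet> (M *v v) > 0)"

definition Mnorm :: "real^'m^'m \<Rightarrow> real^'m \<Rightarrow> real" where
  "Mnorm M v = sqrt (v \<bullet> (M *v v))"

definition norm1 :: "real^'m \<Rightarrow> real" where
  "norm1 v = (\<Sum>i\<in>UNIV. \<bar>v $ i\<bar>)"

definition down :: "(real^'m) set \<Rightarrow> (real^'m) set" where
  "down \<Phi> = {x. \<exists>y\<in>convex hull \<Phi>. \<forall>i. x $ i \<le> y $ i}"

end

theory Submission
  imports Defs
begin

lemma quad_expand: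
  fixes M :: "real^'m^'m" and d e :: "real^'m"
  assumes "transpose M = M"
  shows "(d + s *\<^sub>R e) \<bullet> (M *v (d + s *\<^sub>R e))
       = d \<bullet> (M *v d) + 2 * s * ((M *v d) \<bullet> e) + s^2 * (e \<bullet> (M *v e))"
proof -
  have sym: "d \<bullet> (M *v e) = (M *v d) \<bullet> e"
    by (metis assms dot_lmul_matrix vector_transpose_matrix)
  have "(d + s *\<^sub>R e) \<bullet> (M *v (d + s *\<^sub>R e))
      = d \<bullet> (M *v d) + s * (d \<bullet> (M *v e)) + s * (e \<bullet> (M *v d)) + s^2 * (e \<bullet> (M *v e))"
    by (simp add: matrix_vector_right_distrib matrix_vector_mult_scaleR inner_add_left
        inner_add_right algebra_simps power2_eq_square)
  then show ?thesis using sym by (simp add: inner_commute algebra_simps)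
qed

lemma norm1_scale: "norm1 (c *\<^sub>R v) = \<bar>c\<bar> * norm1 v"
  unfolding norm1_def by (simp add: abs_mult sum_distrib_left)

theorem lemma8:
  fixes M :: "real^'m^'m" and \<Phi> :: "(real^'m) set" and t tup :: "real^'m"
  assumes "sym_pos_def_mat M"
    and "finite \<Phi>" and "\<Phi> \<noteq> {}"
    and "tup \<in> down \<Phi>"
    and "\<forall>x\<in>down \<Phi>. Mnorm M (t - tup) \<le> Mnorm M (t - x)"
    and "t \<notin> down \<Phi>"
  shows "let w = (1 / norm1 (M *v (t - tup))) *\<^sub>R (M *v (t - tup))
         in (\<forall>i. w $ i \<ge> 0) \<and> norm1 w = 1"
proof -
  define d where "d = t - tup"
  have symM: "transpose M = M" and pd: "\<And>v. v \<noteq> 0 \<Longrightarrow> v \<bullet> (M *v v) > 0"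
    using assms(1) by (auto simp: sym_pos_def_mat_def)
  have dne: "d \<noteq> 0" using assms(4,6) by (auto simp: d_def)
  obtain y where y: "y \<in> convex hull \<Phi>" "\<forall>j. tup $ j \<le> y $ j"
    using assms(4) by (auto simp: down_def)
  have nonneg: "(M *v d) $ i \<ge> 0" for i
  proof (rule ccontr)
    assume neg: "\<not> ?thesis"
    define a where "a = (M *v d) $ i"
    define e where "e = (axis i 1 :: real^'m)"
    define c where "c = e \<bullet> (M *v e)"
    have key: "0 \<le> 2 * a + s * c" if s: "s > 0" for s
    proof -
      have "tup - s *\<^sub>R e \<in> down \<Phi>"
        unfolding down_def using y s
        by (auto intro!: bexI[of _ y] simp: e_def axis_def) (smt (verit, best) y(2))
      then have "Mnorm M d \<le> Mnorm M (d + s *\<^sub>R e)"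
        using assms(5) by (auto simp: d_def algebra_simps)
      then have "d \<bullet> (M *v d) \<le> (d + s *\<^sub>R e) \<bullet> (M *v (d + s *\<^sub>R e))"
        by (simp add: Mnorm_def)
      also have "\<dots> = d \<bullet> (M *v d) + 2 * s * a + s^2 * c"
        using quad_expand[OF symM] by (simp add: a_def c_def e_def inner_axis)
      finally have "0 \<le> s * (2 * a + s * c)" by (simp add: algebra_simps power2_eq_square)
      then show ?thesis using s by (simp add: zero_le_mult_iff)
    qed
    have a0: "a < 0" using neg a_def by simp
    define s where "s = - a / (\<bar>c\<bar> + 1)"
    have sp: "s > 0" using a0 by (simp add: s_def divide_neg_pos add_pos_nonneg)
    have "s * \<bar>c\<bar> < -a"
    proof -
      have "s * (\<bar>c\<bar> + 1) = -a" by (simp add: s_def)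
      then show ?thesis using sp by (simp add: algebra_simps)
    qed
    moreover have "s * c \<le> s * \<bar>c\<bar>" using sp by (simp add: mult_left_mono)
    ultimately have "2 * a + s * c < 0" using a0 by linarith
    with key[OF sp] show False by simp
  qed
  have "M *v d \<noteq> 0" using pd[OF dne] by auto
  then obtain k where "(M *v d) $ k \<noteq> 0" by (metis vec_eq_iff zero_index)
  have n1: "norm1 (M *v d) = (\<Sum>i\<in>UNIV. (M *v d) $ i)"
    unfolding norm1_def using nonneg by simp
  have "norm1 (M *v d) > 0"
  proof -
    have "norm1 (M *v d) \<ge> \<bar>(M *v d) $ k\<bar>"
      unfolding norm1_def by (rule member_le_sum) auto
    then show ?thesis using \<open>(M *v d) $ k \<noteq> 0\<close> by linarith
  qed
  then show ?thesis
    unfolding Let_def d_def[symmetric]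
    using nonneg by (simp add: norm1_scale)
qed

end
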